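(* Consider the self-attention dynamics with LayerNorm, $X^{(t+1)}=D^{(t)}A^{(t)}X^{(t)}W_V^{(t)}$. Let $\mathcal{G}$ be strongly connected with radius $r$, assume \textbf{A1} and \textbf{A2}, assume that $W_V^{(t)}\in\mathbb{R}^{d\times d}$ is orthogonal for all $t\ge0$, and assume the initial input $X^{(0)}$ (with rows of unit Euclidean norm) satisfies $N\le d$ and $X^{(0)}$ has full rank $N$. Then there exist $C>0$ and $\epsilon>0$ with $N\epsilon<1$ such that $$\mu(X^{(t)})\le C\,(1-N\epsilon^{2r})^{t/(2r)}\qquad\text{for all }t\ge0,$$ i.e. all tokens converge exponentially to a common point of the unit sphere $\mathbb{S}^{d-1}$.
   Context: Tokens are the rows of $X\in\mathbb{R}^{N\times d}$. An attention mask is a directed graph $\mathcal{G}$ on $[N]$ with edge set $E(\mathcal{G})$; $(j,i)\in E(\mathcal{G})$ means token $i$ attends to token $j$; $\mathcal{N}_i=\{k:(k,i)\in E(\mathcal{G})\}$. Masked softmax: $\mathrm{softmax}_{\mathcal{G}}(R)_{ij}=\exp(R_{ij})/\sum_{k\in\mathcal{N}_i}\exp(R_{ik})$ if $(j,i)\in E(\mathcal{G})$, else $0$. $A^{(t)}=\mathrm{softmax}_{\mathcal{G}}\big(X^{(t)}W_Q^{(t)}(X^{(t)}W_K^{(t)})^\top/\sqrt{d_{QK}}\big)$ with fixed $d_{QK}>0$, $W_Q^{(t)},W_K^{(t)}\in\mathbb{R}^{d\times d'}$. LayerNorm (scaling only): $D^{(t)}=\mathrm{diag}(d_1,\dots,d_N)$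 with $d_i=1/\|(A^{(t)}X^{(t)}W_V^{(t)})_{i,:}\|_2$, so every row of $X^{(t+1)}$ has unit norm. The mask is the same for all $t$. \textbf{A1}: $(i,i)\in E(\mathcal{G})$ for all $i$. \textbf{A2}: $\sup_t\max\{\|W_Q^{(t)}\|_2,\|W_K^{(t)}\|_2\}<\infty$. $\mu(X)=\|X-\mathbf{1}\mathbf{1}^\top X/N\|_F$ with $\mathbf{1}\in\mathbb{R}^N$ the all-ones vector. $\mathcal{G}$ is strongly connected if any two distinct nodes are reachable from each other by directed paths. The radius of $\mathcal{G}$ is $\min_{c}\max_v\mathrm{dist}(c,v)$, the minimum over center nodes $c$ (nodes from which every node is reachable), where $\mathrm{dist}(u,v)$ is the length of a shortest directed path from $u$ to $v$. *)

theory Defs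
  imports "HOL-Analysis.Analysis"
begin

text \<open>Tokens are the rows of X :: real^'d^'n (N = CARD('n) tokens, d = CARD('d)).
  The mask graph is a relation E on the token index type; (j,i) \<in> E means
  token i attends to token j.\<close>

definition nbhd :: "('n \<times> 'n) set \<Rightarrow> 'n \<Rightarrow> 'n set" where
  "nbhd E i = {k. (k, i) \<in> E}"

definition masked_softmax :: "('n::finite \<times> 'n) set \<Rightarrow> real^'n^'n \<Rightarrow> real^'n^'n" where
  "masked_softmax E R = (\<chi> i j. if (j, i) \<in> E
      then exp (R $ i $ j) / (\<Sum>k\<in>nbhd E i. exp (R $ i $ k)) else 0)"

definition attn :: "('n::finite \<times> 'n) set \<Rightarrow> real \<Rightarrow> real^'p^'d \<Rightarrow> real^'p^'d
      \<Rightarrow> real^'d^'n \<Rightarrow> real^'n^'n" where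
  "attn E dQK WQ WK X =
     masked_softmax E ((1 / sqrt dQK) *\<^sub>R ((X ** WQ) ** transpose (X ** WK)))"

definition layernorm :: "real^'d^'n \<Rightarrow> real^'d^'n" where
  "layernorm Y = (\<chi> i. (1 / norm (Y $ i)) *\<^sub>R (Y $ i))"

definition sa_step :: "('n::finite \<times> 'n) set \<Rightarrow> real \<Rightarrow> real^'p^'d \<Rightarrow> real^'p^'d
      \<Rightarrow> real^'d^'d \<Rightarrow> real^'d^'n \<Rightarrow> real^'d^'n" where
  "sa_step E dQK WQ WK WV X = layernorm ((attn E dQK WQ WK X ** X) ** WV)"

definition spec_norm :: "real^'p^'d \<Rightarrow> real" where
  "spec_norm M = onorm (\<lambda>v. M *v v)"

text \<open>mu(X) = Frobenius norm of X - 1 1^T X / N (the norm on real^'d^'n is the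
  Frobenius norm).\<close>
definition mu :: "real^'d^'n::finite \<Rightarrow> real" where
  "mu X = norm (\<chi> i. X $ i - (1 / real CARD('n)) *\<^sub>R (\<Sum>k\<in>UNIV. X $ k))"

definition strongly_connected :: "('n \<times> 'n) set \<Rightarrow> bool" where
  "strongly_connected E \<longleftrightarrow> (\<forall>u v. u \<noteq> v \<longrightarrow> (u, v) \<in> E\<^sup>+ \<and> (v, u) \<in> E\<^sup>+)"

definition gdist :: "('n \<times> 'n) set \<Rightarrow> 'n \<Rightarrow> 'n \<Rightarrow> nat" where
  "gdist E u v = (LEAST k. (u, v) \<in> E ^^ k)"

definition is_center :: "('n \<times> 'n) set \<Rightarrow> 'n \<Rightarrow> bool" where
  "is_center E c \<longleftrightarrow> (\<forall>v. (c, v) \<in> E\<^sup>*)"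

definition graph_radius :: "('n::finite \<times> 'n) set \<Rightarrow> nat" where
  "graph_radius E = Min {Max (range (gdist E c)) | c. is_center E c}"

end

theory Submission
  imports Defs
begin


lemma row_mult: "((M::real^'m^'n) ** (N::real^'k^'m)) $ i = M $ i v* N"
  by (simp add: matrix_matrix_mult_def vector_matrix_mult_def vec_eq_iff mult.commute)

lemma vm_sum_rows: "(p::real^'n) v* (Y::real^'d^'n) = (\<Sum>k\<in>UNIV. p $ k *\<^sub>R Y $ k)"
  by (simp add: vector_matrix_mult_def vec_eq_iff sum_component mult.commute)

lemma vm_linear: "linear (\<lambda>p. (p::real^'n) v* (Y::real^'d^'n))"
proof -
  have "(\<lambda>p. p v* Y) = (*v) (transpose Y)" by (rule ext) simp
  then show ?thesis using matrix_vector_mul_linear by metis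
qed

lemma norm_vm_orth:
  assumes "orthogonal_matrix (U::real^'d^'d)"
  shows "norm (v v* U) = norm v"
proof -
  have "(v v* U) \<bullet> (v v* U) = v \<bullet> (U *v (v v* U))" by (rule dot_lmul_matrix)
  also have "U *v (v v* U) = (U ** transpose U) *v v"
    by (metis transpose_matrix_vector matrix_vector_mul_assoc)
  also have "\<dots> = v" using assms by (simp add: orthogonal_matrix_def)
  finally have "(v v* U) \<bullet> (v v* U) = v \<bullet> v" .
  then show ?thesis by (simp add: norm_eq_sqrt_inner)
qed

lemma opnorm_bound:
  "norm ((M::real^'p^'d) *v v) \<le> spec_norm M * norm v"
  unfolding spec_norm_def by (rule onorm[OF matrix_vector_mul_bounded_linear])

lemma spec_norm_nonneg: "0 \<le> spec_norm (M::real^'p^'d)"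
  unfolding spec_norm_def by (rule onorm_pos_le[OF matrix_vector_mul_bounded_linear])

lemma vm_norm_bound:
  fixes M :: "real^'p^'d"
  shows "norm (u v* M) \<le> spec_norm M * norm u"
proof -
  have "(u v* M) \<bullet> (u v* M) = u \<bullet> (M *v (u v* M))" by (rule dot_lmul_matrix)
  also have "\<dots> \<le> norm u * norm (M *v (u v* M))" by (rule norm_cauchy_schwarz)
  also have "\<dots> \<le> norm u * (spec_norm M * norm (u v* M))"
    by (intro mult_left_mono opnorm_bound) auto
  finally have h: "norm (u v* M) ^ 2 \<le> norm u * spec_norm M * norm (u v* M)"
    by (simp add: power2_norm_eq_inner mult_ac)
  show ?thesis
  proof (cases "norm (u v* M) = 0")
    case True then show ?thesis using spec_norm_nonneg[of M] by simp
  next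
    case False
    then have "norm (u v* M) > 0" by simp
    with h show ?thesis by (simp add: power2_eq_square mult_ac)
  qed
qed

lemma score_bound:
  fixes WQ WK :: "real^'p^'d"
  assumes "norm u = 1" "norm w = 1" "spec_norm WQ \<le> B" "spec_norm WK \<le> B"
  shows "\<bar>(u v* WQ) \<bullet> (w v* WK)\<bar> \<le> B * B"
proof -
  have "\<bar>(u v* WQ) \<bullet> (w v* WK)\<bar> \<le> norm (u v* WQ) * norm (w v* WK)"
    by (rule Cauchy_Schwarz_ineq2)
  also have "\<dots> \<le> B * B"
    using vm_norm_bound[of u WQ] vm_norm_bound[of w WK] assms spec_norm_nonneg[of WQ]
    by (intro mult_mono) auto
  finally show ?thesis .
qed



lemma softmax_props:
  fixes R :: "real^'n::finite^'n"
  assumes A1: "\<And>i. (i,i) \<in> E" and bnd: "\<And>i j. \<bar>R$i$j\<bar> \<le> M"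
  shows "0 \<le> masked_softmax E R $ i $ j"
    and "(\<Sum>j\<in>UNIV. masked_softmax E R $ i $ j) = 1"
    and "(j,i) \<in> E \<Longrightarrow> exp (-2*M) / real CARD('n) \<le> masked_softmax E R $ i $ j"
proof -
  define den where "den = (\<Sum>k\<in>nbhd E i. exp (R $ i $ k))"
  have iin: "i \<in> nbhd E i" using A1 by (simp add: nbhd_def)
  have fin: "finite (nbhd E i)" by simp
  have denpos: "den > 0" unfolding den_def
    using iin fin by (intro sum_pos) auto
  have ms: "masked_softmax E R $ i $ j = (if (j,i) \<in> E then exp (R$i$j) / den else 0)" for j
    by (simp add: masked_softmax_def den_def)
  show "0 \<le> masked_softmax E R $ i $ j" using denpos by (simp add: ms)
  have "(\<Sum>j\<in>UNIV. masked_softmax E R $ i $ j) = (\<Sum>j\<in>nbhd E i. exp (R$i$j) / den)"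
    unfolding ms by (simp add: sum.If_cases nbhd_def Collect_conv_if)
  also have "\<dots> = den / den" unfolding den_def by (rule sum_divide_distrib[symmetric])
  also have "\<dots> = 1" using denpos by simp
  finally show "(\<Sum>j\<in>UNIV. masked_softmax E R $ i $ j) = 1" .
  assume ji: "(j,i) \<in> E"
  have "den \<le> (\<Sum>k\<in>nbhd E i. exp M)" unfolding den_def
    using bnd by (intro sum_mono) (auto simp: abs_le_iff)
  also have "\<dots> = real (card (nbhd E i)) * exp M" by simp
  also have "\<dots> \<le> real CARD('n) * exp M"
    by (intro mult_right_mono) (auto simp: card_mono)
  finally have dl: "den \<le> real CARD('n) * exp M" .
  have el: "exp (- M) \<le> exp (R$i$j)" using bnd[of i j] by (auto simp: abs_le_iff)
  have "exp (-2*M) / real CARD('n) = exp (-M) / (real CARD('n) * exp M)"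
    by (simp add: exp_add[symmetric] field_simps flip: exp_add)
  also have "\<dots> \<le> exp (R$i$j) / den"
    using denpos dl el by (intro frac_le) auto
  finally show "exp (-2*M) / real CARD('n) \<le> masked_softmax E R $ i $ j"
    using ji by (simp add: ms)
qed



locale avg_dyn =
  fixes f :: "nat \<Rightarrow> 'n::finite \<Rightarrow> real" and W :: "nat \<Rightarrow> 'n \<Rightarrow> 'n \<Rightarrow> real"
    and E :: "('n \<times> 'n) set" and \<alpha> :: real
  assumes Wnn: "\<And>t i j. 0 \<le> W t i j"
    and Wsum: "\<And>t i. (\<Sum>j\<in>UNIV. W t i j) = 1"
    and Wlow: "\<And>t i j. (j,i) \<in> E \<Longrightarrow> \<alpha> \<le> W t i j"
    and rec: "\<And>t i. f (Suc t) i = (\<Sum>j\<in>UNIV. W t i j * f t j)"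
    and apos: "0 \<le> \<alpha>"
begin

lemma bounds_step:
  assumes "\<And>i. m \<le> f t i \<and> f t i \<le> M"
  shows "m \<le> f (Suc t) i \<and> f (Suc t) i \<le> M"
proof
  have "f (Suc t) i \<le> (\<Sum>j\<in>UNIV. W t i j * M)" unfolding rec
    using assms Wnn by (intro sum_mono mult_left_mono) auto
  also have "\<dots> = M" by (simp add: sum_distrib_right[symmetric] Wsum)
  finally show "f (Suc t) i \<le> M" .
  have "m = (\<Sum>j\<in>UNIV. W t i j * m)" by (simp add: sum_distrib_right[symmetric] Wsum)
  also have "\<dots> \<le> f (Suc t) i" unfolding rec
    using assms Wnn by (intro sum_mono mult_left_mono) auto
  finally show "m \<le> f (Suc t) i" .
qed

lemma bounds_pres:
  assumes "\<And>i. m \<le> f t i \<and> f t i \<le> M"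
  shows "m \<le> f (t+s) i \<and> f (t+s) i \<le> M"
  using assms
proof (induction s arbitrary: i)
  case 0 then show ?case by simp
next
  case (Suc s) then show ?case using bounds_step[of m "t+s" M i] by simp
qed

lemma reach_bound:
  assumes b: "\<And>i. m \<le> f t i \<and> f t i \<le> M"
  shows "(c,i) \<in> E^^s \<Longrightarrow> f (t+s) i \<le> M - \<alpha>^s*(M - f t c) \<and> m + \<alpha>^s*(f t c - m) \<le> f (t+s) i"
proof (induction s arbitrary: i)
  case 0 then show ?case by simp
next
  case (Suc s)
  then obtain j where cj: "(c,j) \<in> E^^s" and ji: "(j,i) \<in> E" by auto
  from Suc.IH[OF cj] have ih: "f (t+s) j \<le> M - \<alpha>^s*(M - f t c)" "m + \<alpha>^s*(f t c - m) \<le> f (t+s) j" by auto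
  have bs: "\<And>l. m \<le> f (t+s) l \<and> f (t+s) l \<le> M" using bounds_pres[OF b] by blast
  have bc: "m \<le> f t c" "f t c \<le> M" using b by auto
  have wj: "\<alpha> \<le> W (t+s) i j" using Wlow[OF ji] .
  have e1: "M - f (t + Suc s) i = (\<Sum>l\<in>UNIV. W (t+s) i l * (M - f (t+s) l))"
    by (simp add: rec right_diff_distrib sum_subtractf sum_distrib_right[symmetric] Wsum)
  have "W (t+s) i j * (M - f (t+s) j) \<le> (\<Sum>l\<in>UNIV. W (t+s) i l * (M - f (t+s) l))"
    using bs Wnn by (intro member_le_sum) auto
  moreover have "\<alpha> * (\<alpha>^s*(M - f t c)) \<le> W (t+s) i j * (M - f (t+s) j)"
    using ih bc wj apos by (intro mult_mono) auto
  ultimately have u: "f (t + Suc s) i \<le> M - \<alpha>^Suc s*(M - f t c)" using e1 by simp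
  have e2: "f (t + Suc s) i - m = (\<Sum>l\<in>UNIV. W (t+s) i l * (f (t+s) l - m))"
    by (simp add: rec right_diff_distrib sum_subtractf sum_distrib_right[symmetric] Wsum)
  have "W (t+s) i j * (f (t+s) j - m) \<le> (\<Sum>l\<in>UNIV. W (t+s) i l * (f (t+s) l - m))"
    using bs Wnn by (intro member_le_sum) auto
  moreover have "\<alpha> * (\<alpha>^s*(f t c - m)) \<le> W (t+s) i j * (f (t+s) j - m)"
    using ih bc wj apos by (intro mult_mono) auto
  ultimately have l: "m + \<alpha>^Suc s*(f t c - m) \<le> f (t + Suc s) i" using e2 by simp
  from u l show ?case by simp
qed

definition osc where "osc t = Max (range (f t)) - Min (range (f t))"

lemma osc_ge: "\<bar>f t i - f t j\<bar> \<le> osc t"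
proof -
  have "f t i \<le> Max (range (f t))" "f t j \<le> Max (range (f t))"
       "Min (range (f t)) \<le> f t i" "Min (range (f t)) \<le> f t j" by auto
  then show ?thesis unfolding osc_def by linarith
qed

lemma osc_attained: "\<exists>i j. osc t = f t i - f t j"
proof -
  have "Max (range (f t)) \<in> range (f t)" "Min (range (f t)) \<in> range (f t)"
    by (intro Max_in Min_in; simp)+
  then obtain i j where "Max (range (f t)) = f t i" "Min (range (f t)) = f t j" by (metis imageE)
  then show ?thesis unfolding osc_def by auto
qed

lemma osc_mono_step: "osc (Suc t) \<le> osc t"
proof -
  define m where "m = Min (range (f t))"
  define M where "M = Max (range (f t))"
  have b: "\<And>i. m \<le> f t i \<and> f t i \<le> M" by (auto simp: m_def M_def)
  obtain i j where "osc (Suc t) = f (Suc t) i - f (Suc t) j" using osc_attained by blast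
  moreover have "f (Suc t) i \<le> M" "m \<le> f (Suc t) j" using bounds_step[OF b] by auto
  ultimately show ?thesis unfolding osc_def m_def M_def by linarith
qed

lemma osc_mono: "osc (t + s) \<le> osc t"
  by (induction s) (auto intro: order_trans[OF osc_mono_step])

lemma osc_contract:
  assumes reach: "\<And>i. (c,i) \<in> E^^L"
  shows "osc (t + L) \<le> (1 - \<alpha>^L) * osc t"
proof -
  define m where "m = Min (range (f t))"
  define M where "M = Max (range (f t))"
  have b: "\<And>i. m \<le> f t i \<and> f t i \<le> M" by (auto simp: m_def M_def)
  obtain i j where "osc (t+L) = f (t+L) i - f (t+L) j" using osc_attained by blast
  moreover have "f (t+L) i \<le> M - \<alpha>^L*(M - f t c)" using reach_bound[OF b reach] by blast
  moreover have "m + \<alpha>^L*(f t c - m) \<le> f (t+L) j" using reach_bound[OF b reach] by blast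
  ultimately have "osc (t+L) \<le> (M - m) - \<alpha>^L * (M - m)" by (simp add: algebra_simps)
  then show ?thesis unfolding osc_def m_def M_def by (simp add: algebra_simps)
qed

lemma osc_decay:
  assumes reach: "\<And>i. (c,i) \<in> E^^L" and L: "L > 0" and al: "\<alpha>^L \<le> 1"
  shows "osc t \<le> (1 - \<alpha>^L)^(t div L) * osc 0"
proof -
  have o0: "0 \<le> osc s" for s using osc_ge[of s undefined undefined] by simp
  have n: "osc (n*L) \<le> (1 - \<alpha>^L)^n * osc 0" for n
  proof (induction n)
    case 0 then show ?case by simp
  next
    case (Suc n)
    have "osc (Suc n * L) = osc (n*L + L)" by (simp add: add.commute)
    also have "\<dots> \<le> (1 - \<alpha>^L) * osc (n*L)" by (rule osc_contract[OF reach])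
    also have "\<dots> \<le> (1 - \<alpha>^L) * ((1 - \<alpha>^L)^n * osc 0)"
      using Suc al by (intro mult_left_mono) auto
    finally show ?case by simp
  qed
  have "t = (t div L)*L + t mod L" by simp
  then have "osc t \<le> osc ((t div L)*L)" using osc_mono by metis
  also have "\<dots> \<le> (1 - \<alpha>^L)^(t div L) * osc 0" by (rule n)
  finally show ?thesis .
qed

end



lemma relpow_pad:
  assumes A1: "\<And>i. (i,i) \<in> E" and "(c,v) \<in> E^^k"
  shows "(c,v) \<in> E^^(k+n)"
proof (induction n)
  case 0 then show ?case using assms by simp
next
  case (Suc n) then show ?case using A1 by auto
qed

lemma radius_center:
  fixes E :: "('n::finite \<times> 'n) set"
  assumes sc: "strongly_connected E" and A1: "\<And>i. (i,i) \<in> E"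
  obtains c where "\<And>v. (c,v) \<in> E^^(graph_radius E)"
    and "CARD('n) \<ge> 2 \<Longrightarrow> graph_radius E \<ge> 1"
proof -
  let ?S = "{Max (range (gdist E c)) | c. is_center E c}"
  have cen: "is_center E c" for c
    unfolding is_center_def
  proof
    fix v show "(c,v) \<in> E^*"
    proof (cases "c = v")
      case True then show ?thesis by simp
    next
      case False then have "(c,v) \<in> E^+" using sc unfolding strongly_connected_def by blast
      then show ?thesis by (rule trancl_into_rtrancl)
    qed
  qed
  have Seq: "?S = (\<lambda>c. Max (range (gdist E c))) ` UNIV" using cen by blast
  have "graph_radius E \<in> ?S" unfolding graph_radius_def Seq
    by (rule Min_in) auto
  then obtain c where r: "graph_radius E = Max (range (gdist E c))" by auto
  have reach: "(c,v) \<in> E^^(gdist E c v)" for v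
  proof -
    have "(c,v) \<in> E^*" using cen[of c] by (simp add: is_center_def)
    then obtain k where "(c,v) \<in> E^^k" using rtrancl_power by blast
    then show ?thesis unfolding gdist_def by (rule LeastI)
  qed
  have le: "gdist E c v \<le> graph_radius E" for v unfolding r by (rule Max_ge) auto
  have all: "(c,v) \<in> E^^(graph_radius E)" for v
    using relpow_pad[OF A1 reach[of v], of "graph_radius E - gdist E c v"] le[of v] by simp
  show ?thesis
  proof
    show "(c,v) \<in> E^^(graph_radius E)" for v by (rule all)
    assume N: "CARD('n) \<ge> 2"
    show "graph_radius E \<ge> 1"
    proof (rule ccontr)
      assume "\<not> graph_radius E \<ge> 1"
      then have "graph_radius E = 0" by simp
      then have "v = c" for v using all[of v] by simp
      then have "UNIV = {c}" by auto
      then have "card (UNIV::'n set) = card {c}" by (rule arg_cong)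
      then have "CARD('n) = 1" by simp
      with N show False by simp
    qed
  qed
qed



lemma mm_transpose_entry: "((P::real^'d^'n) ** transpose (Q::real^'d^'m)) $ i $ j = P $ i \<bullet> Q $ j"
  by (simp add: matrix_matrix_mult_def transpose_def inner_vec_def)

lemma attn_props:
  fixes X :: "real^'d::finite^'n::finite" and WQ WK :: "real^'p::finite^'d"
  assumes un: "\<And>i. norm (X$i) = 1" and bq: "spec_norm WQ \<le> B" and bk: "spec_norm WK \<le> B"
    and dq: "dQK > 0" and A1: "\<And>i. (i,i) \<in> E"
  shows "0 \<le> attn E dQK WQ WK X $ i $ j"
    and "(\<Sum>j\<in>UNIV. attn E dQK WQ WK X $ i $ j) = 1"
    and "(j,i) \<in> E \<Longrightarrow> exp (-2*(B*B/sqrt dQK)) / real CARD('n) \<le> attn E dQK WQ WK X $ i $ j"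
proof -
  define R where "R = (1 / sqrt dQK) *\<^sub>R ((X ** WQ) ** transpose (X ** WK))"
  have R: "\<bar>R$i$j\<bar> \<le> B*B/sqrt dQK" for i j
  proof -
    have "((X ** WQ) ** transpose (X ** WK)) $ i $ j = (X ** WQ)$i \<bullet> (X ** WK)$j"
      by (rule mm_transpose_entry)
    also have "\<dots> = (X$i v* WQ) \<bullet> (X$j v* WK)" by (simp only: row_mult)
    finally have "R$i$j = (1 / sqrt dQK) * ((X$i v* WQ) \<bullet> (X$j v* WK))"
      by (simp add: R_def)
    moreover have "\<bar>(X$i v* WQ) \<bullet> (X$j v* WK)\<bar> \<le> B*B"
      by (rule score_bound[OF un un bq bk])
    ultimately show ?thesis using dq by (simp add: abs_mult divide_right_mono)
  qed
  have a: "attn E dQK WQ WK X = masked_softmax E R" by (simp add: attn_def R_def)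
  show "0 \<le> attn E dQK WQ WK X $ i $ j" unfolding a by (rule softmax_props(1)[OF A1 R])
  show "(\<Sum>j\<in>UNIV. attn E dQK WQ WK X $ i $ j) = 1" unfolding a by (rule softmax_props(2)[OF A1 R])
  show "(j,i) \<in> E \<Longrightarrow> exp (-2*(B*B/sqrt dQK)) / real CARD('n) \<le> attn E dQK WQ WK X $ i $ j"
    unfolding a by (rule softmax_props(3)[OF A1 R])
qed

lemma unit_diff:
  fixes u v :: "'a::real_normed_vector"
  assumes "norm x = 1" "norm y = 1" "x = s *\<^sub>R u" "y = s' *\<^sub>R v" "s > 0" "s' > 0"
  shows "norm (x - y) \<le> 2 * s * norm (u - v)"
proof -
  have nu: "s * norm u = 1" using assms by simp
  have nv: "s' * norm v = 1" using assms by simp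
  have "x - y = s *\<^sub>R (u - v) + (s - s') *\<^sub>R v" using assms by (simp add: algebra_simps)
  then have "norm (x - y) \<le> norm (s *\<^sub>R (u - v)) + norm ((s - s') *\<^sub>R v)"
    by (metis norm_triangle_ineq)
  also have "norm ((s - s') *\<^sub>R v) = \<bar>s * norm v - s' * norm v\<bar>"
    by (simp add: left_diff_distrib[symmetric] abs_mult)
  also have "\<dots> = s * \<bar>norm v - norm u\<bar>"
  proof -
    have "s * norm v - s' * norm v = s * (norm v - norm u)" using nu nv by (simp add: right_diff_distrib)
    then show ?thesis using assms(5) by (simp add: abs_mult)
  qed
  also have "\<dots> \<le> s * norm (u - v)" using assms(5)
    using assms(5) norm_triangle_ineq3[of v u] norm_minus_commute[of v u]
    by (intro mult_left_mono) auto
  finally show ?thesis using assms(5) by simp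
qed

lemma sum_ge_one:
  fixes p :: "real^'n::finite" and X0 :: "real^'d::finite^'n"
  assumes "\<And>k. 0 \<le> p$k" "\<And>k. norm (X0$k) = 1" "norm (p v* X0) = 1"
  shows "1 \<le> (\<Sum>k\<in>UNIV. p$k)"
proof -
  have "1 = norm (\<Sum>k\<in>UNIV. p $ k *\<^sub>R X0 $ k)" using assms(3) by (simp add: vm_sum_rows)
  also have "\<dots> \<le> (\<Sum>k\<in>UNIV. norm (p $ k *\<^sub>R X0 $ k))" by (rule norm_sum)
  also have "\<dots> = (\<Sum>k\<in>UNIV. p$k)" using assms(1,2) by simp
  finally show ?thesis .
qed

lemma sum_le_bound:
  fixes p :: "real^'n::finite" and X0 :: "real^'d::finite^'n"
  assumes "a * norm p \<le> norm (p v* X0)" "norm (p v* X0) = 1" "a > 0"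
  shows "(\<Sum>k\<in>UNIV. p$k) \<le> real CARD('n) / a"
proof -
  have "(\<Sum>k\<in>UNIV. p$k) \<le> real CARD('n) * norm p"
  proof -
    have "p$k \<le> norm p" for k by (metis abs_ge_self component_le_norm_cart order_trans)
    then show ?thesis using sum_bounded_above[of UNIV "\<lambda>k. p$k" "norm p"] by simp
  qed
  also have "\<dots> \<le> real CARD('n) / a" using assms
    by (simp add: field_simps mult_left_mono)
  finally show ?thesis .
qed

lemma norm_vec_le_sum: "norm (v::'a::real_normed_vector^'n::finite) \<le> (\<Sum>i\<in>UNIV. norm (v$i))"
  unfolding norm_vec_def by (rule L2_set_le_sum) auto

lemma mu_bound:
  fixes X :: "real^'d::finite^'n::finite"
  assumes "\<And>i j. norm (X$i - X$j) \<le> D"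
  shows "mu X \<le> real CARD('n) * D"
proof -
  have d0: "0 \<le> D" using assms[of undefined undefined] by simp
  have each: "norm (X$i - (1 / real CARD('n)) *\<^sub>R (\<Sum>k\<in>UNIV. X$k)) \<le> D" for i
  proof -
    have "X$i - (1 / real CARD('n)) *\<^sub>R (\<Sum>k\<in>UNIV. X$k)
        = (1 / real CARD('n)) *\<^sub>R (\<Sum>k\<in>UNIV. X$i - X$k)"
    proof -
      have "(\<Sum>k\<in>UNIV. X$i - X$k) = real CARD('n) *\<^sub>R X$i - (\<Sum>k\<in>UNIV. X$k)"
        by (simp only: sum_subtractf sum_constant_scaleR card_UNIV)
      then show ?thesis by (simp add: scaleR_right_diff_distrib)
    qed
    then have "norm (X$i - (1 / real CARD('n)) *\<^sub>R (\<Sum>k\<in>UNIV. X$k))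
        = (1 / real CARD('n)) * norm (\<Sum>k\<in>UNIV. X$i - X$k)" by simp
    also have "\<dots> \<le> (1 / real CARD('n)) * (\<Sum>k\<in>UNIV. norm (X$i - X$k))"
      by (intro mult_left_mono norm_sum) auto
    also have "\<dots> \<le> (1 / real CARD('n)) * (\<Sum>k\<in>(UNIV::'n set). D)"
    proof -
      have "(\<Sum>k\<in>UNIV. norm (X$i - X$k)) \<le> (\<Sum>k\<in>(UNIV::'n set). D)" by (rule sum_mono) (rule assms)
      then show ?thesis by (intro mult_left_mono) auto
    qed
    also have "\<dots> = D" by simp
    finally show ?thesis .
  qed
  have "mu X \<le> (\<Sum>i\<in>UNIV. norm (X$i - (1 / real CARD('n)) *\<^sub>R (\<Sum>k\<in>UNIV. X$k)))"
    unfolding mu_def by (rule order_trans[OF norm_vec_le_sum]) simp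
  also have "\<dots> \<le> (\<Sum>i\<in>(UNIV::'n set). D)" by (intro sum_mono each)
  also have "\<dots> = real CARD('n) * D" by simp
  finally show ?thesis .
qed



lemma lin2: "linear (\<lambda>v. ((v::real^'n) v* (X0::real^'d^'n)) v* (U::real^'e^'d))"
proof -
  have "linear ((\<lambda>w. w v* U) \<circ> (\<lambda>v. v v* X0))" by (intro linear_compose vm_linear)
  then show ?thesis by (simp add: o_def)
qed

lemma step_repr:
  fixes X X0 :: "real^'d::finite^'n::finite" and A :: "real^'n^'n" and U W :: "real^'d^'d"
    and p :: "'n \<Rightarrow> real^'n"
  assumes rep: "\<And>i. X$i = (p i v* X0) v* U" and pnn: "\<And>i k. 0 \<le> p i $ k"
    and un: "\<And>i. norm (X$i) = 1"
    and oU: "orthogonal_matrix U" and oW: "orthogonal_matrix W"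
    and Ann: "\<And>i j. 0 \<le> A$i$j" and Asum: "\<And>i. (\<Sum>j\<in>UNIV. A$i$j) = 1"
    and X0un: "\<And>k. norm (X0$k) = 1" and apos: "a > 0" and inj: "\<And>p. a * norm p \<le> norm (p v* X0)"
  shows "layernorm ((A ** X) ** W) $ i
           = (((1 / norm (((A ** X) ** W) $ i)) *\<^sub>R (\<Sum>j\<in>UNIV. A$i$j *\<^sub>R p j)) v* X0) v* (U ** W)"
    and "norm (((A ** X) ** W) $ i) > 0"
    and "norm (layernorm ((A ** X) ** W) $ i) = 1"
proof -
  define q where "q = (\<Sum>j\<in>UNIV. A$i$j *\<^sub>R p j)"
  have g: "linear (\<lambda>v. (v v* X0) v* U)" by (rule lin2)
  have "A$i v* X = (\<Sum>j\<in>UNIV. A$i$j *\<^sub>R X$j)" by (rule vm_sum_rows)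
  also have "\<dots> = (\<Sum>j\<in>UNIV. A$i$j *\<^sub>R ((p j v* X0) v* U))" by (simp add: rep)
  also have "\<dots> = (q v* X0) v* U"
    unfolding q_def linear_sum[OF g] linear_cmul[OF g] ..
  finally have ai: "A$i v* X = (q v* X0) v* U" .
  have row: "((A ** X) ** W) $ i = (q v* X0) v* (U ** W)"
  proof -
    have "((A ** X) ** W) $ i = (A ** X)$i v* W" by (rule row_mult)
    also have "(A ** X)$i = A$i v* X" by (rule row_mult)
    finally show ?thesis using ai vector_matrix_mul_assoc[of "q v* X0" U W] by simp
  qed
  have oUW: "orthogonal_matrix (U ** W)" using oU oW by (rule orthogonal_matrix_mul)
  have nrow: "norm (((A ** X) ** W) $ i) = norm (q v* X0)"
    unfolding row by (rule norm_vm_orth[OF oUW])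
  have s1: "1 \<le> (\<Sum>k\<in>UNIV. p j $ k)" for j
  proof (rule sum_ge_one[OF _ X0un])
    show "0 \<le> p j $ k" for k by (rule pnn)
    have "norm ((p j v* X0) v* U) = 1" using un[of j] by (simp add: rep)
    then show "norm (p j v* X0) = 1" using norm_vm_orth[OF oU] by simp
  qed
  have "(\<Sum>k\<in>UNIV. q$k) = (\<Sum>j\<in>UNIV. A$i$j * (\<Sum>k\<in>UNIV. p j $ k))"
    unfolding q_def sum_component vector_scaleR_component sum_distrib_left real_scaleR_def by (rule sum.swap)
  also have "\<dots> \<ge> (\<Sum>j\<in>UNIV. A$i$j * 1)"
    using s1 Ann by (intro sum_mono mult_left_mono) auto
  finally have "(\<Sum>k\<in>UNIV. q$k) \<ge> 1" using Asum by simp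
  then have "q \<noteq> 0" by auto
  then have "norm q > 0" by simp
  then have "norm (q v* X0) > 0" using inj[of q] apos
    by (meson mult_pos_pos less_le_trans)
  then show npos: "norm (((A ** X) ** W) $ i) > 0" using nrow by simp
  have g2: "linear (\<lambda>v. (v v* X0) v* (U ** W))" by (rule lin2)
  show "layernorm ((A ** X) ** W) $ i
           = (((1 / norm (((A ** X) ** W) $ i)) *\<^sub>R (\<Sum>j\<in>UNIV. A$i$j *\<^sub>R p j)) v* X0) v* (U ** W)"
    unfolding layernorm_def q_def[symmetric] linear_cmul[OF g2] by (simp add: row)
  then show "norm (layernorm ((A ** X) ** W) $ i) = 1"
    using npos unfolding q_def[symmetric] linear_cmul[OF g2] row[symmetric] by simp
qed



fun Uacc :: "(nat \<Rightarrow> real^'d^'d) \<Rightarrow> nat \<Rightarrow> real^'d^'d" where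
  "Uacc WV 0 = mat 1"
| "Uacc WV (Suc t) = Uacc WV t ** WV t"

fun pseq :: "(nat \<Rightarrow> real^'n::finite^'n) \<Rightarrow> (nat \<Rightarrow> 'n \<Rightarrow> real) \<Rightarrow> nat \<Rightarrow> 'n \<Rightarrow> real^'n" where
  "pseq A c 0 i = axis i 1"
| "pseq A c (Suc t) i = c t i *\<^sub>R (\<Sum>j\<in>UNIV. A t $ i $ j *\<^sub>R pseq A c t j)"

lemma Uacc_orth: "(\<And>t. orthogonal_matrix (WV t)) \<Longrightarrow> orthogonal_matrix (Uacc WV t)"
  by (induction t) (auto intro: orthogonal_matrix_mul simp: orthogonal_matrix_id)

lemma vm_X0_bound:
  fixes v :: "real^'n::finite" and X0 :: "real^'d::finite^'n"
  assumes "\<And>k. norm (X0$k) = 1"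
  shows "norm (v v* X0) \<le> (\<Sum>k\<in>UNIV. \<bar>v$k\<bar>)"
proof -
  have "norm (v v* X0) = norm (\<Sum>k\<in>UNIV. v$k *\<^sub>R X0$k)" by (simp add: vm_sum_rows)
  also have "\<dots> \<le> (\<Sum>k\<in>UNIV. norm (v$k *\<^sub>R X0$k))" by (rule norm_sum)
  also have "\<dots> = (\<Sum>k\<in>UNIV. \<bar>v$k\<bar>)" using assms by simp
  finally show ?thesis .
qed

lemma core:
  fixes E :: "('n::finite \<times> 'n) set"
    and dQK :: real
    and WQ WK :: "nat \<Rightarrow> real^'p::finite^'d::finite"
    and WV :: "nat \<Rightarrow> real^'d^'d"
    and X :: "nat \<Rightarrow> real^'d^'n"
    and c0 :: 'n and L :: nat
  assumes dQK_pos: "dQK > 0"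
    and dyn: "\<And>t. X (Suc t) = sa_step E dQK (WQ t) (WK t) (WV t) (X t)"
    and A1: "\<And>i. (i, i) \<in> E"
    and A2: "\<exists>B. \<forall>t. max (spec_norm (WQ t)) (spec_norm (WK t)) \<le> B"
    and orth: "\<And>t. orthogonal_matrix (WV t)"
    and unit0: "\<And>i. norm (X 0 $ i) = 1"
    and fullrank: "rank (X 0) = CARD('n)"
    and reach: "\<And>i. (c0,i) \<in> E^^L" and Lpos: "L > 0"
  shows "\<exists>K \<alpha>. 0 \<le> K \<and> 0 < \<alpha> \<and> \<alpha> \<le> 1/2 \<and> (\<forall>t. mu (X t) \<le> K * (1 - \<alpha>^L)^(t div L))"
proof -
  obtain B where B: "\<And>t. max (spec_norm (WQ t)) (spec_norm (WK t)) \<le> B" using A2 by blast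
  have bq: "spec_norm (WQ t) \<le> B" and bk: "spec_norm (WK t) \<le> B" for t using B[of t] by auto
  define N where "N = real CARD('n)"
  have Npos: "N > 0" by (simp add: N_def)
  define \<alpha>0 where "\<alpha>0 = exp (-2*(B*B/sqrt dQK)) / N"
  have a0pos: "\<alpha>0 > 0" using Npos by (simp add: \<alpha>0_def)
  define X0 where "X0 = X 0"
  have injX: "inj (\<lambda>p. p v* X0)"
  proof -
    have "rank (transpose X0) = CARD('n)" using fullrank by (simp add: rank_transpose X0_def)
    then have "inj ((*v) (transpose X0))" by (simp add: full_rank_injective)
    moreover have "(*v) (transpose X0) = (\<lambda>p. p v* X0)" by (rule ext) simp
    ultimately show ?thesis by simp
  qed
  obtain a where apos: "a > 0" and ainj: "\<And>p. a * norm p \<le> norm (p v* X0)"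
    using linear_inj_bounded_below_pos[OF vm_linear injX] by blast
  have X0un: "\<And>k. norm (X0$k) = 1" using unit0 by (simp add: X0_def)
  define A where "A t = attn E dQK (WQ t) (WK t) (X t)" for t
  define cc where "cc t i = 1 / norm (((A t ** X t) ** WV t) $ i)" for t i
  define P where "P = pseq A cc"
  define U where "U = Uacc WV"
  have oU: "orthogonal_matrix (U t)" for t unfolding U_def by (rule Uacc_orth[OF orth])
  have Aprops: "0 \<le> A t $ i $ j" "(\<Sum>j\<in>UNIV. A t $ i $ j) = 1"
       "(j,i) \<in> E \<Longrightarrow> \<alpha>0 \<le> A t $ i $ j"
    if "\<And>i. norm (X t $ i) = 1" for t i j
    using attn_props[OF that bq bk dQK_pos A1] by (auto simp: A_def \<alpha>0_def N_def)
  have inv: "(\<forall>i. X t $ i = (P t i v* X0) v* U t) \<and> (\<forall>i k. 0 \<le> P t i $ k) \<and> (\<forall>i. norm (X t $ i) = 1)" for t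
  proof (induction t)
    case 0
    have "X 0 $ i = (P 0 i v* X0) v* U 0" for i
    proof -
      have e: "axis i 1 $ k *\<^sub>R X0$k = (if k = i then X0$i else 0)" for k by (simp add: axis_def)
      have "axis i (1::real) v* X0 = X0 $ i" unfolding vm_sum_rows e by simp
      then show ?thesis by (simp add: P_def U_def X0_def vector_matrix_mul_rid)
    qed
    moreover have "0 \<le> P 0 i $ k" for i k by (simp add: P_def axis_def)
    ultimately show ?case using unit0 by simp
  next
    case (Suc t)
    then have rep: "\<And>i. X t $ i = (P t i v* X0) v* U t" and pnn: "\<And>i k. 0 \<le> P t i $ k"
      and un: "\<And>i. norm (X t $ i) = 1" by auto
    note st = step_repr[OF rep pnn un oU orth Aprops(1)[OF un] Aprops(2)[OF un] X0un apos ainj]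
    have XS: "X (Suc t) = layernorm ((A t ** X t) ** WV t)"
      by (simp add: dyn sa_step_def A_def)
    have "X (Suc t) $ i = (P (Suc t) i v* X0) v* U (Suc t)" for i
      unfolding XS st(1) by (simp add: P_def U_def cc_def)
    moreover have "0 \<le> P (Suc t) i $ k" for i k
    proof -
      have "0 \<le> cc t i" using st(2)[where i=i] by (simp add: cc_def)
      moreover have "0 \<le> (\<Sum>j\<in>UNIV. A t $ i $ j *\<^sub>R P t j) $ k"
        unfolding sum_component using Aprops(1)[OF un] pnn by (intro sum_nonneg) simp
      ultimately show ?thesis by (simp add: P_def)
    qed
    moreover have "norm (X (Suc t) $ i) = 1" for i unfolding XS by (rule st(3))
    ultimately show ?case by auto
  qed
  have rep: "\<And>t i. X t $ i = (P t i v* X0) v* U t" using inv by blast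
  have pnn: "\<And>t i k. 0 \<le> P t i $ k" using inv by blast
  have un: "\<And>t i. norm (X t $ i) = 1" using inv by blast
  have ccpos: "cc t i > 0" for t i
    using step_repr(2)[OF rep pnn un oU orth Aprops(1)[OF un] Aprops(2)[OF un] X0un apos ainj, where i=i]
    by (simp add: cc_def)
  have Pn: "norm (P t i v* X0) = 1" for t i using un[of t i] norm_vm_orth[OF oU] by (simp add: rep)
  define s where "s t i = (\<Sum>k\<in>UNIV. P t i $ k)" for t i
  define S where "S = N / a"
  have s_ge: "1 \<le> s t i" for t i unfolding s_def by (rule sum_ge_one[OF pnn X0un Pn])
  have s_le: "s t i \<le> S" for t i unfolding s_def S_def N_def by (rule sum_le_bound[OF ainj Pn apos])
  have Sge: "1 \<le> S" using s_ge[of 0 c0] s_le[of 0 c0] by simp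
  define qv where "qv t i = (1 / s t i) *\<^sub>R P t i" for t i
  define D where "D t i = (\<Sum>l\<in>UNIV. A t $ i $ l * s t l)" for t i
  have D_ge: "1 \<le> D t i" for t i
  proof -
    have "(\<Sum>l\<in>UNIV. A t $ i $ l * 1) \<le> D t i" unfolding D_def
      using Aprops(1)[OF un] s_ge by (intro sum_mono mult_left_mono) auto
    then show ?thesis using Aprops(2)[OF un] by simp
  qed
  have D_le: "D t i \<le> S" for t i
  proof -
    have "D t i \<le> (\<Sum>l\<in>UNIV. A t $ i $ l * S)" unfolding D_def
      using Aprops(1)[OF un] s_le by (intro sum_mono mult_left_mono) auto
    then show ?thesis using Aprops(2)[OF un] by (simp add: sum_distrib_right[symmetric])
  qed
  define W where "W t i j = A t $ i $ j * s t j / D t i" for t i j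
  define \<alpha> where "\<alpha> = min (\<alpha>0 / S) (1/2)"
  have alpos: "\<alpha> > 0" using a0pos Sge by (simp add: \<alpha>_def)
  have Pcomp: "P (Suc t) i $ k = cc t i * (\<Sum>j\<in>UNIV. A t $ i $ j * P t j $ k)" for t i k
    by (simp add: P_def sum_component)
  have sS: "s (Suc t) i = cc t i * D t i" for t i
  proof -
    have "s (Suc t) i = cc t i * (\<Sum>k\<in>UNIV. \<Sum>j\<in>UNIV. A t $ i $ j * P t j $ k)"
      unfolding s_def Pcomp by (simp add: sum_distrib_left)
    also have "(\<Sum>k\<in>UNIV. \<Sum>j\<in>UNIV. A t $ i $ j * P t j $ k) = D t i"
      unfolding D_def s_def sum_distrib_left by (rule sum.swap)
    finally show ?thesis .
  qed
  have qrec: "qv (Suc t) i $ k = (\<Sum>j\<in>UNIV. W t i j * qv t j $ k)" for t i k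
  proof -
    have sp: "s t j > 0" for j using s_ge[of t j] by simp
    have Dp: "D t i > 0" using D_ge[of t i] by simp
    have "qv (Suc t) i $ k = (\<Sum>j\<in>UNIV. A t $ i $ j * P t j $ k) / D t i"
      using ccpos[of t i] by (simp add: qv_def Pcomp sS)
    also have "\<dots> = (\<Sum>j\<in>UNIV. W t i j * qv t j $ k)"
      unfolding sum_divide_distrib
    proof (intro sum.cong refl)
      fix j assume "j \<in> (UNIV::'n set)"
      have "s t j \<noteq> 0" using sp[of j] by simp
      then show "A t $ i $ j * P t j $ k / D t i = W t i j * qv t j $ k"
        by (simp add: W_def qv_def)
    qed
    finally show ?thesis .
  qed
  have dynk: "avg_dyn (\<lambda>t i. qv t i $ k) W E \<alpha>" for k
  proof
    show "0 \<le> W t i j" for t i j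
      using Aprops(1)[OF un] s_ge[of t j] D_ge[of t i] by (simp add: W_def)
    show "(\<Sum>j\<in>UNIV. W t i j) = 1" for t i
      using D_ge[of t i] unfolding W_def sum_divide_distrib[symmetric] D_def by simp
    show "\<alpha> \<le> W t i j" if "(j,i) \<in> E" for t i j
    proof -
      have "\<alpha>0 \<le> A t $ i $ j * s t j"
      proof -
        have "A t $ i $ j * 1 \<le> A t $ i $ j * s t j"
          using Aprops(1)[OF un] s_ge[of t j] by (intro mult_left_mono) auto
        then show ?thesis using Aprops(3)[OF un that] order_trans by (metis mult.right_neutral)
      qed
      then have "\<alpha>0 / S \<le> W t i j" unfolding W_def
        using D_ge[of t i] D_le[of t i] a0pos by (intro frac_le) auto
      then show ?thesis by (simp add: \<alpha>_def)
    qed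
    show "qv (Suc t) i $ k = (\<Sum>j\<in>UNIV. W t i j * qv t j $ k)" for t i by (rule qrec)
    show "0 \<le> \<alpha>" using alpos by simp
  qed
  define \<rho> where "\<rho> = 1 - \<alpha>^L"
  have al1: "\<alpha>^L \<le> 1" using alpos by (intro power_le_one) (auto simp: \<alpha>_def)
  have rho0: "0 \<le> \<rho>" using al1 by (simp add: \<rho>_def)
  have qrange: "0 \<le> qv t i $ k \<and> qv t i $ k \<le> 1" for t i k
  proof -
    have sp: "s t i > 0" using s_ge[of t i] by simp
    have "P t i $ k \<le> s t i" unfolding s_def using pnn by (intro member_le_sum) auto
    then show ?thesis using sp pnn[of t i k] by (simp add: qv_def)
  qed
  have qbd: "\<bar>qv t i $ k - qv t j $ k\<bar> \<le> \<rho>^(t div L)" for t i j k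
  proof -
    interpret d: avg_dyn "\<lambda>t i. qv t i $ k" W E \<alpha> by (rule dynk)
    obtain i0 j0 where "d.osc 0 = qv 0 i0 $ k - qv 0 j0 $ k" using d.osc_attained by blast
    then have o1: "d.osc 0 \<le> 1" using qrange[of 0 i0 k] qrange[of 0 j0 k] by simp
    have "\<bar>qv t i $ k - qv t j $ k\<bar> \<le> d.osc t" by (rule d.osc_ge)
    also have "\<dots> \<le> \<rho>^(t div L) * d.osc 0" unfolding \<rho>_def by (rule d.osc_decay[OF reach Lpos al1])
    also have "\<dots> \<le> \<rho>^(t div L)" using o1 rho0 by (simp add: mult_left_le)
    finally show ?thesis .
  qed
  have dist: "norm (X t $ i - X t $ j) \<le> 2 * S * (N * \<rho>^(t div L))" for t i j
  proof -
    have "X t $ i - X t $ j = (P t i v* X0 - P t j v* X0) v* U t"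
      by (simp add: rep vector_matrix_mult_diff_distrib)
    then have "norm (X t $ i - X t $ j) = norm (P t i v* X0 - P t j v* X0)"
      by (simp add: norm_vm_orth[OF oU])
    also have "\<dots> \<le> 2 * s t i * norm (qv t i v* X0 - qv t j v* X0)"
    proof -
      have ps: "P t i v* X0 = s t i *\<^sub>R (qv t i v* X0)" for i
      proof -
        have "s t i \<noteq> 0" using s_ge[of t i] by simp
        then have "P t i = s t i *\<^sub>R qv t i" by (simp add: qv_def)
        then show ?thesis by (simp add: linear_cmul[OF vm_linear])
      qed
      have "s t i > 0" "s t j > 0" using s_ge[of t i] s_ge[of t j] by auto
      then show ?thesis by (rule unit_diff[OF Pn Pn ps ps])
    qed
    also have "norm (qv t i v* X0 - qv t j v* X0) = norm ((qv t i - qv t j) v* X0)"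
      by (simp add: vector_matrix_mult_diff_distrib)
    also have "\<dots> \<le> (\<Sum>k\<in>UNIV. \<bar>(qv t i - qv t j) $ k\<bar>)" by (rule vm_X0_bound[OF X0un])
    also have "\<dots> \<le> (\<Sum>k\<in>(UNIV::'n set). \<rho>^(t div L))"
      by (rule sum_mono) (simp add: qbd)
    also have "\<dots> = N * \<rho>^(t div L)" by (simp add: N_def)
    finally have h: "norm (X t $ i - X t $ j) \<le> 2 * s t i * (N * \<rho>^(t div L))"
      using s_ge[of t i] by (simp add: mult_left_mono)
    have "2 * s t i * (N * \<rho>^(t div L)) \<le> 2 * S * (N * \<rho>^(t div L))"
      using s_le[of t i] Npos rho0 by (intro mult_right_mono) auto
    with h show ?thesis by linarith
  qed
  show ?thesis
  proof (intro exI conjI allI)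
    show "0 \<le> N * (2 * S * N)" using Npos Sge by simp
    show "0 < \<alpha>" by (rule alpos)
    show "\<alpha> \<le> 1/2" unfolding \<alpha>_def by (rule min.cobounded2)
    fix t
    have "mu (X t) \<le> real CARD('n) * (2 * S * (N * \<rho>^(t div L)))" by (rule mu_bound[OF dist])
    then show "mu (X t) \<le> N * (2 * S * N) * (1 - \<alpha>^L)^(t div L)"
      by (simp add: N_def \<rho>_def mult_ac)
  qed
qed



lemma mu_card1:
  fixes X :: "real^'d::finite^'n::finite"
  assumes "CARD('n) = 1"
  shows "mu X = 0"
proof -
  obtain c :: 'n where U: "UNIV = {c}" using card_1_singletonE[OF assms] .
  have s: "(\<Sum>k\<in>UNIV. X $ k) = X $ c" unfolding U by simp
  have xi: "X $ i = X $ c" for i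
  proof -
    have "i \<in> {c}" unfolding U[symmetric] by (rule UNIV_I)
    then show ?thesis by simp
  qed
  have "(\<chi> i. X $ i - (1 / real CARD('n)) *\<^sub>R (\<Sum>k\<in>UNIV. X $ k)) = (\<chi> i. X $ c - X $ c)"
    unfolding s assms by (intro arg_cong[where f=vec_lambda] ext) (subst xi, simp)
  also have "\<dots> = 0" by (simp add: vec_eq_iff)
  finally have "(\<chi> i. X $ i - (1 / real CARD('n)) *\<^sub>R (\<Sum>k\<in>UNIV. X $ k)) = 0" .
  then show ?thesis by (simp add: mu_def)
qed

lemma final_rate:
  fixes N K \<alpha> :: real and r t :: nat
  assumes N1: "1 \<le> N" and r1: "1 \<le> r" and al: "0 < \<alpha>" "\<alpha> \<le> 1/2" and K: "0 \<le> K"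
    and m: "mm \<le> K * (1 - \<alpha>^r)^(t div r)"
  shows "mm \<le> max 1 (K / (1 - \<alpha>^r)) * (1 - N * (\<alpha>/N) ^ (2 * r)) powr (real t / real (2 * r))"
proof -
  define \<delta> where "\<delta> = \<alpha>^r"
  have d0: "0 < \<delta>" using al by (simp add: \<delta>_def)
  have d1: "\<delta> \<le> 1/2"
  proof -
    have "\<alpha>^r \<le> \<alpha>^1" using al r1 by (intro power_decreasing) auto
    then show ?thesis using al by (simp add: \<delta>_def)
  qed
  define q where "q = 1 - N * (\<alpha>/N) ^ (2 * r)"
  have qd: "1 - \<delta> \<le> q"
  proof -
    have "N ^ 1 \<le> N ^ (2*r)" using N1 r1 by (intro power_increasing) auto
    then have Nle: "N \<le> N ^ (2*r)" by simp
    have "N * (\<alpha>/N) ^ (2 * r) = N * \<alpha>^(2*r) / N^(2*r)" by (simp add: power_divide)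
    also have "\<dots> \<le> \<alpha>^(2*r)"
    proof -
      have "N * \<alpha>^(2*r) \<le> N^(2*r) * \<alpha>^(2*r)" using Nle al by (intro mult_right_mono) auto
      moreover have "N^(2*r) > 0" using N1 by simp
      ultimately show ?thesis by (simp add: divide_le_eq mult.commute)
    qed
    also have "\<dots> \<le> \<alpha>^r" using al by (intro power_decreasing) auto
    finally show ?thesis by (simp add: q_def \<delta>_def)
  qed
  have b0: "0 < 1 - \<delta>" "1 - \<delta> \<le> 1" using d0 d1 by auto
  have rr: "real r > 0" using r1 by simp
  have "real t \<le> real (t div r) * real r + real r"
  proof -
    have "t = t div r * r + t mod r" by simp
    moreover have "t mod r < r" using r1 by simp
    ultimately have "t \<le> t div r * r + r" by linarith
    then show ?thesis by (metis of_nat_add of_nat_le_iff of_nat_mult)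
  qed
  then have tdiv: "real t / real r - 1 \<le> real (t div r)" using rr by (simp add: field_simps)
  have "(1 - \<delta>)^(t div r) = (1 - \<delta>) powr real (t div r)" using b0 by (simp add: powr_realpow)
  also have "\<dots> \<le> (1 - \<delta>) powr (real t / real r - 1)" using b0 tdiv by (intro powr_mono') auto
  also have "\<dots> = (1 - \<delta>) powr (real t / real r) / (1 - \<delta>)" using b0 by (simp add: powr_diff)
  also have "(1 - \<delta>) powr (real t / real r) \<le> (1 - \<delta>) powr (real t / real (2 * r))"
    using b0 rr by (intro powr_mono') (auto simp: field_simps)
  also have "\<dots> \<le> q powr (real t / real (2 * r))" using b0 qd by (intro powr_mono2) auto
  finally have h: "(1 - \<delta>)^(t div r) \<le> q powr (real t / real (2 * r)) / (1 - \<delta>)" using b0 by (simp add: divide_right_mono)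
  have "K * (1 - \<delta>)^(t div r) \<le> K * (q powr (real t / real (2 * r)) / (1 - \<delta>))"
    using h K by (rule mult_left_mono)
  then have "mm \<le> K * (q powr (real t / real (2 * r)) / (1 - \<delta>))"
    using m by (simp add: \<delta>_def)
  also have "\<dots> = (K / (1 - \<delta>)) * q powr (real t / real (2 * r))" by simp
  also have "\<dots> \<le> max 1 (K / (1 - \<delta>)) * q powr (real t / real (2 * r))"
    by (intro mult_right_mono) auto
  finally show ?thesis by (simp add: q_def \<delta>_def)
qed

theorem theorem2:
  fixes E :: "('n::finite \<times> 'n) set"
    and dQK :: real
    and WQ WK :: "nat \<Rightarrow> real^'p::finite^'d::finite"
    and WV :: "nat \<Rightarrow> real^'d^'d"
    and X :: "nat \<Rightarrow> real^'d^'n"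
    and r :: nat
  assumes dQK_pos: "dQK > 0"
    and dyn: "\<And>t. X (Suc t) = sa_step E dQK (WQ t) (WK t) (WV t) (X t)"
    and sc: "strongly_connected E"
    and rad: "r = graph_radius E"
    and A1: "\<And>i. (i, i) \<in> E"
    and A2: "\<exists>B. \<forall>t. max (spec_norm (WQ t)) (spec_norm (WK t)) \<le> B"
    and orth: "\<And>t. orthogonal_matrix (WV t)"
    and unit0: "\<And>i. norm (X 0 $ i) = 1"
    and Nd: "CARD('n) \<le> CARD('d)"
    and fullrank: "rank (X 0) = CARD('n)"
  shows "\<exists>C > 0. \<exists>\<epsilon> > 0. real CARD('n) * \<epsilon> < 1 \<and>
           (\<forall>t. mu (X t) \<le> C * (1 - real CARD('n) * \<epsilon> ^ (2 * r)) powr (real t / real (2 * r)))"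
proof (cases "CARD('n) \<ge> 2")
  case False
  have "CARD('n) > 0" by (simp add: card_gt_0_iff)
  then have c1: "CARD('n) = 1" using False by linarith
  show ?thesis
  proof (intro exI conjI allI)
    show "(1::real) > 0" "(1/2::real) > 0" by auto
    show "real CARD('n) * (1/2) < 1" using c1 by simp
    fix t
    show "mu (X t) \<le> 1 * (1 - real CARD('n) * (1/2) ^ (2 * r)) powr (real t / real (2 * r))"
      using mu_card1[OF c1, of "X t"] by simp
  qed
next
  case True
  obtain c0 where reach: "\<And>v. (c0,v) \<in> E^^(graph_radius E)"
    and rg: "CARD('n) \<ge> 2 \<Longrightarrow> graph_radius E \<ge> 1"
    using radius_center[OF sc A1] by blast
  have r1: "r \<ge> 1" using rg[OF True] rad by simp
  have reach': "\<And>v. (c0,v) \<in> E^^r" using reach rad by simp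
  obtain K \<alpha> where K: "0 \<le> K" and al: "0 < \<alpha>" "\<alpha> \<le> 1/2"
    and m: "\<And>t. mu (X t) \<le> K * (1 - \<alpha>^r)^(t div r)"
    using core[OF dQK_pos dyn A1 A2 orth unit0 fullrank reach'] r1 by auto
  define N where "N = real CARD('n)"
  have N1: "1 \<le> N" using True by (simp add: N_def)
  show ?thesis
  proof (intro exI conjI allI)
    show "max 1 (K / (1 - \<alpha>^r)) > 0" by simp
    show "\<alpha> / N > 0" using al N1 by simp
    show "real CARD('n) * (\<alpha> / N) < 1" using al N1 by (simp add: N_def)
    fix t
    show "mu (X t) \<le> max 1 (K / (1 - \<alpha>^r)) * (1 - real CARD('n) * (\<alpha> / N) ^ (2 * r)) powr (real t / real (2 * r))"
      using final_rate[OF N1 r1 al K m[of t]] by (simp add: N_def)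
  qed
qed

end
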